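(* Let $X=\mathbb P(1,\dots,1,r)=\operatorname{Proj}k[x_0,\dots,x_{n-1},y]$ with $\deg x_i=1$, $\deg y=r>1$, and let $d$ be a positive multiple of $r$. Then \[\mathrm{Aut}_{gr}(S)\cong(GL_n\times\mathbb G_m)\ltimes\mathbb G_a^L,\qquad L=\binom{n-1+r}{r},\] so the unipotent radical $U\cong\mathbb G_a^L$ is abelian. Moreover, for any $N>0$ the action of $\hat U=\lambda_{g,N}(\mathbb G_m)\ltimes U$ on $\mathcal Y_d$ with respect to $\mathcal O(1)$ satisfies condition $(\mathfrak C^* )$: $\mathrm{Stab}_U([f])=\{e\}$ for every $[f]\in Z_{\min}$ (here $Z_{\min}=\{[y^{d/r}]\}$).
   Context: Work over an algebraically closed field $k$ of characteristic $0$. $S$ is the weighted polynomial ring above, $\mathrm{Aut}_{gr}(S)$ its group of graded $k$-algebra automorphisms, $\mathcal Y_d=\mathbb P(S_d)$ with $g\cdot[f]=[g(f)]$. For $N>0$, $\lambda_{g,N}(t)$: $x_i\mapsto t^{-N}x_i$, $y\mapsto ty$, and $\hat U=\lambda_{g,N}(\mathbb G_m)\ltimes U$. $Z_{\min}=\mathbb P(V_{\min})\subset\mathcal Y_d$ where $V_{\min}$ is the minimal weight space of the induced $\mathbb G_m$-action on $V=H^0(\mathcal Y_d,\mathcal O(1))^\vee$. Condition $(\mathfrak C^* )$ means $\mathrm{Stab}_U(z)=\{e\}$ for all $z\in Z_{\min}$. *)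

theory Defs
  imports "HOL-Analysis.Analysis" "HOL-Computational_Algebra.Polynomial"
          "HOL-Library.Poly_Mapping" "HOL-Algebra.Group"
begin

text \<open>The weighted polynomial ring S = k[x_0,...,x_{n-1},y].  The variables are indexed
  by the type 'n option: x_i = Some i (with n = CARD('n)), and y = None.\<close>

type_synonym ('n,'k) wpoly = "('n option \<Rightarrow>\<^sub>0 nat) \<Rightarrow>\<^sub>0 'k"

definition Xv :: "'n option \<Rightarrow> ('n,'k::comm_ring_1) wpoly" where
  "Xv v = Poly_Mapping.single (Poly_Mapping.single v 1) 1"

definition cst :: "'k::comm_ring_1 \<Rightarrow> ('n,'k) wpoly" where
  "cst c = Poly_Mapping.single 0 c"

definition wdeg :: "nat \<Rightarrow> ('n::finite option \<Rightarrow>\<^sub>0 nat) \<Rightarrow> nat" where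
  "wdeg r m = (\<Sum>i\<in>UNIV. Poly_Mapping.lookup m (Some i)) + r * Poly_Mapping.lookup m None"

definition homog :: "nat \<Rightarrow> nat \<Rightarrow> ('n::finite,'k::comm_ring_1) wpoly \<Rightarrow> bool" where
  "homog r e p \<longleftrightarrow> (\<forall>m\<in>Poly_Mapping.keys p. wdeg r m = e)"

definition gr_aut :: "nat \<Rightarrow> (('n::finite,'k::comm_ring_1) wpoly \<Rightarrow> ('n,'k) wpoly) \<Rightarrow> bool" where
  "gr_aut r \<phi> \<longleftrightarrow> bij \<phi>
     \<and> (\<forall>p q. \<phi> (p + q) = \<phi> p + \<phi> q)
     \<and> (\<forall>p q. \<phi> (p * q) = \<phi> p * \<phi> q)
     \<and> (\<forall>c. \<phi> (cst c) = cst c)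
     \<and> (\<forall>e p. homog r e p \<longrightarrow> homog r e (\<phi> p))"

definition AutGr :: "nat \<Rightarrow> ((('n::finite,'k::comm_ring_1) wpoly \<Rightarrow> ('n,'k) wpoly)) monoid" where
  "AutGr r = \<lparr>carrier = {\<phi>. gr_aut r \<phi>}, monoid.mult = (\<circ>), one = id\<rparr>"

definition psubst :: "('n option \<Rightarrow> ('n,'k::comm_ring_1) wpoly) \<Rightarrow> ('n,'k) wpoly \<Rightarrow> ('n,'k) wpoly" where
  "psubst \<sigma> p = (\<Sum>m\<in>Poly_Mapping.keys p. cst (Poly_Mapping.lookup p m) * (\<Prod>v\<in>Poly_Mapping.keys m. \<sigma> v ^ Poly_Mapping.lookup m v))"

definition Hr :: "nat \<Rightarrow> ('n::finite,'k::comm_ring_1) wpoly set" where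
  "Hr r = {h. \<forall>m\<in>Poly_Mapping.keys h. Poly_Mapping.lookup m None = 0 \<and> wdeg r m = r}"

definition xmonos :: "nat \<Rightarrow> ('n::finite option \<Rightarrow>\<^sub>0 nat) set" where
  "xmonos r = {m. Poly_Mapping.lookup m None = 0 \<and> wdeg r m = r}"

definition Phi :: "'k^'n^'n \<Rightarrow> 'k \<Rightarrow> ('n::finite,'k::comm_ring_1) wpoly \<Rightarrow> ('n,'k) wpoly \<Rightarrow> ('n,'k) wpoly" where
  "Phi A c h = psubst (\<lambda>v. case v of
        Some i \<Rightarrow> (\<Sum>j\<in>UNIV. cst (A $ j $ i) * Xv (Some j))
      | None \<Rightarrow> cst c * Xv None + h)"

definition SemiDir :: "nat \<Rightarrow> (('k^'n^'n) \<times> 'k \<times> ('n::finite,'k::field) wpoly) monoid" where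
  "SemiDir r = \<lparr>carrier = {(A,c,h). invertible A \<and> c \<noteq> 0 \<and> h \<in> Hr r},
     monoid.mult = (\<lambda>(A,c,h) (A',c',h'). (matrix_matrix_mult A A', c * c', cst c' * h + Phi A 1 0 h')),
     one = (mat 1, 1, 0)\<rparr>"

definition Urad :: "nat \<Rightarrow> ((('n::finite,'k::field) wpoly \<Rightarrow> ('n,'k) wpoly)) set" where
  "Urad r = {Phi (mat 1) 1 h | h. h \<in> Hr r}"

text \<open>Weight of the monomial x^a y^b in V = H^0(Y_d,O(1))^\<or> for the one-parameter
  subgroup \<lambda>_{g,N}: x_i \<mapsto> t^{-N} x_i, y \<mapsto> t y (convention of the paper,
  under which Z_min = {[y^{d/r}]}): N|a| - b.\<close>
definition wt :: "nat \<Rightarrow> ('n::finite option \<Rightarrow>\<^sub>0 nat) \<Rightarrow> int" where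
  "wt N m = int N * int (\<Sum>i\<in>UNIV. Poly_Mapping.lookup m (Some i)) - int (Poly_Mapping.lookup m None)"

definition minwt :: "nat \<Rightarrow> nat \<Rightarrow> nat \<Rightarrow> 'n::finite itself \<Rightarrow> int" where
  "minwt N r d _ = Min {wt N (m :: 'n option \<Rightarrow>\<^sub>0 nat) | m. wdeg r m = d}"

text \<open>V_min: the minimal weight space inside S_d; Z_min = P(V_min)\<close>
definition Vmin :: "nat \<Rightarrow> nat \<Rightarrow> nat \<Rightarrow> ('n::finite,'k::comm_ring_1) wpoly set" where
  "Vmin N r d = {f. homog r d f \<and> (\<forall>m\<in>Poly_Mapping.keys f. wt N m = minwt N r d TYPE('n))}"

definition StabU :: "nat \<Rightarrow> ('n::finite,'k::field) wpoly \<Rightarrow> (('n,'k) wpoly \<Rightarrow> ('n,'k) wpoly) set" where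
  "StabU r f = {u \<in> Urad r. \<exists>c. c \<noteq> 0 \<and> u f = cst c * f}"

end

theory Submission
  imports Defs
begin


abbreviation lk where "lk \<equiv> Poly_Mapping.lookup"
abbreviation ks where "ks \<equiv> Poly_Mapping.keys"

lemma pm_expand: "p = (\<Sum>m\<in>ks p. Poly_Mapping.single m (lk p m))"
  for p :: "'a \<Rightarrow>\<^sub>0 'b::comm_monoid_add"
proof (rule poly_mapping_eqI)
  fix k
  have "lk (\<Sum>m\<in>ks p. Poly_Mapping.single m (lk p m)) k = (\<Sum>m\<in>ks p. (lk p m when m = k))"
    by (simp add: lookup_sum lookup_single)
  also have "\<dots> = lk p k"
    by (cases "k \<in> ks p") (auto simp: when_def in_keys_iff)
  finally show "lk p k = lk (\<Sum>m\<in>ks p. Poly_Mapping.single m (lk p m)) k" by simp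
qed

lemma cst_add: "cst (a+b) = cst a + cst b" by (simp add: cst_def single_add)
lemma cst_mult: "cst a * cst b = cst (a*b)" by (simp add: cst_def mult_single)
lemma cst_0[simp]: "cst 0 = 0" by (simp add: cst_def)
lemma cst_1[simp]: "cst 1 = 1" by (simp add: cst_def)
lemma cst_single: "cst a * Poly_Mapping.single m b = Poly_Mapping.single m (a*b)"
  by (simp add: cst_def mult_single)
lemma lookup_cst_mult: "lk (cst a * p) m = a * lk p m"
proof -
  have "cst a * p = Poly_Mapping.map ((*) a) p" by (simp add: cst_def mult_map_scale_conv_mult)
  then show ?thesis by (simp add: map.rep_eq when_def)
qed

definition pmon :: "('v \<Rightarrow> (('v \<Rightarrow>\<^sub>0 nat) \<Rightarrow>\<^sub>0 'k::comm_ring_1)) \<Rightarrow> ('v \<Rightarrow>\<^sub>0 nat) \<Rightarrow> (('v \<Rightarrow>\<^sub>0 nat) \<Rightarrow>\<^sub>0 'k)" where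
  "pmon \<sigma> m = (\<Prod>v\<in>ks m. \<sigma> v ^ lk m v)"

lemma pmon_superset: "finite S \<Longrightarrow> ks m \<subseteq> S \<Longrightarrow> pmon \<sigma> m = (\<Prod>v\<in>S. \<sigma> v ^ lk m v)"
  unfolding pmon_def by (rule prod.mono_neutral_left) (auto simp: in_keys_iff)

lemma pmon_add: "pmon \<sigma> (a+b) = pmon \<sigma> a * pmon \<sigma> b"
proof -
  let ?S = "ks a \<union> ks b"
  have "pmon \<sigma> (a+b) = (\<Prod>v\<in>?S. \<sigma> v ^ lk (a+b) v)"
    using keys_add[of a b] by (intro pmon_superset) auto
  also have "\<dots> = (\<Prod>v\<in>?S. \<sigma> v ^ lk a v) * (\<Prod>v\<in>?S. \<sigma> v ^ lk b v)"
    by (simp add: lookup_add power_add prod.distrib)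
  also have "\<dots> = pmon \<sigma> a * pmon \<sigma> b"
    by (simp add: pmon_superset[of "ks a \<union> ks b" a] pmon_superset[of "ks a \<union> ks b" b])
  finally show ?thesis .
qed

lemma pmon_0[simp]: "pmon \<sigma> 0 = 1" by (simp add: pmon_def)

lemma pmon_single: "pmon \<sigma> (Poly_Mapping.single v k) = \<sigma> v ^ k"
  by (simp add: pmon_def)

lemma psubst_alt: "psubst \<sigma> p = (\<Sum>m\<in>ks p. cst (lk p m) * pmon \<sigma> m)"
  by (simp add: psubst_def pmon_def)

lemma psubst_superset: "finite S \<Longrightarrow> ks p \<subseteq> S \<Longrightarrow> psubst \<sigma> p = (\<Sum>m\<in>S. cst (lk p m) * pmon \<sigma> m)"
  unfolding psubst_alt by (rule sum.mono_neutral_left) (auto simp: in_keys_iff)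

lemma psubst_add: "psubst \<sigma> (p+q) = psubst \<sigma> p + psubst \<sigma> q"
proof -
  let ?S = "ks p \<union> ks q"
  have "psubst \<sigma> (p+q) = (\<Sum>m\<in>?S. cst (lk (p+q) m) * pmon \<sigma> m)"
    using keys_add[of p q] by (intro psubst_superset) auto
  also have "\<dots> = (\<Sum>m\<in>?S. cst (lk p m) * pmon \<sigma> m) + (\<Sum>m\<in>?S. cst (lk q m) * pmon \<sigma> m)"
    by (simp add: lookup_add cst_add distrib_right sum.distrib)
  also have "\<dots> = psubst \<sigma> p + psubst \<sigma> q"
    by (simp add: psubst_superset[of "ks p \<union> ks q" p] psubst_superset[of "ks p \<union> ks q" q])
  finally show ?thesis .
qed

lemma psubst_0[simp]: "psubst \<sigma> 0 = 0" by (simp add: psubst_def)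

lemma psubst_single: "psubst \<sigma> (Poly_Mapping.single m c) = cst c * pmon \<sigma> m"
  by (cases "c = 0") (simp_all add: psubst_alt)

lemma psubst_sum: "psubst \<sigma> (sum f A) = (\<Sum>a\<in>A. psubst \<sigma> (f a))"
  by (induction A rule: infinite_finite_induct) (simp_all add: psubst_add)

lemma psubst_mult: "psubst \<sigma> (p*q) = psubst \<sigma> p * psubst \<sigma> q"
proof -
  have "p * q = (\<Sum>a\<in>ks p. Poly_Mapping.single a (lk p a)) * (\<Sum>b\<in>ks q. Poly_Mapping.single b (lk q b))"
    using pm_expand[of p] pm_expand[of q] by simp
  also have "\<dots> = (\<Sum>a\<in>ks p. \<Sum>b\<in>ks q. Poly_Mapping.single (a+b) (lk p a * lk q b))"
    by (simp add: sum_product mult_single)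
  finally have "psubst \<sigma> (p*q) = (\<Sum>a\<in>ks p. \<Sum>b\<in>ks q. cst (lk p a * lk q b) * pmon \<sigma> (a+b))"
    by (simp add: psubst_sum psubst_single)
  also have "\<dots> = (\<Sum>a\<in>ks p. \<Sum>b\<in>ks q. (cst (lk p a) * pmon \<sigma> a) * (cst (lk q b) * pmon \<sigma> b))"
    by (simp add: pmon_add cst_mult[symmetric] mult_ac)
  also have "\<dots> = psubst \<sigma> p * psubst \<sigma> q"
    by (simp add: psubst_alt sum_product)
  finally show ?thesis .
qed

lemma psubst_cst[simp]: "psubst \<sigma> (cst c) = cst c"
  by (simp add: cst_def psubst_single)

lemma psubst_Xv[simp]: "psubst \<sigma> (Xv v) = \<sigma> v"
  by (simp add: Xv_def psubst_single pmon_single)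

lemma single_pow: "Poly_Mapping.single a (1::'k::comm_ring_1) ^ k = Poly_Mapping.single (\<Sum>i<k. a) 1"
  by (induction k) (simp_all add: mult_single add.commute)

lemma single_sum_nat: "(\<Sum>i<k. Poly_Mapping.single v (Suc 0)) = Poly_Mapping.single v k"
  by (induction k) (simp_all add: single_add[symmetric])

lemma prod_single: "(\<Prod>v\<in>S. Poly_Mapping.single (f v) (1::'k::comm_ring_1)) = Poly_Mapping.single (\<Sum>v\<in>S. f v) 1"
  by (induction S rule: infinite_finite_induct) (simp_all add: mult_single)

lemma pmon_Xv: "pmon Xv m = Poly_Mapping.single m 1"
proof -
  have "pmon Xv m = (\<Prod>v\<in>ks m. Poly_Mapping.single (Poly_Mapping.single v (lk m v)) 1)"
    unfolding pmon_def Xv_def by (simp add: single_pow single_sum_nat)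
  also have "\<dots> = Poly_Mapping.single m 1"
    by (simp add: prod_single pm_expand[of m, symmetric])
  finally show ?thesis .
qed

lemma psubst_Xv_id: "psubst Xv p = p"
  by (subst (2) pm_expand[of p]) (simp add: psubst_alt pmon_Xv cst_single)

lemma hom_eq_psubst:
  fixes \<phi> :: "('n,'k::comm_ring_1) wpoly \<Rightarrow> ('n,'k) wpoly"
  assumes add: "\<And>p q. \<phi> (p+q) = \<phi> p + \<phi> q" and mul: "\<And>p q. \<phi> (p*q) = \<phi> p * \<phi> q"
    and c: "\<And>a. \<phi> (cst a) = cst a"
  shows "\<phi> p = psubst (\<phi> \<circ> Xv) p"
proof -
  have z: "\<phi> 0 = 0" using add[of 0 0] by simp
  have s: "\<phi> (sum f A) = (\<Sum>a\<in>A. \<phi> (f a))" for f :: "_ \<Rightarrow> ('n,'k) wpoly" and A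
    by (induction A rule: infinite_finite_induct) (simp_all add: z add)
  have o: "\<phi> 1 = 1" using c[of 1] by simp
  have pw: "\<phi> (q^k) = \<phi> q ^ k" for q k by (induction k) (simp_all add: o mul)
  have pr: "\<phi> (prod f A) = (\<Prod>a\<in>A. \<phi> (f a))" for f :: "_ \<Rightarrow> ('n,'k) wpoly" and A
    by (induction A rule: infinite_finite_induct) (simp_all add: o mul)
  have "\<phi> p = \<phi> (\<Sum>m\<in>ks p. cst (lk p m) * pmon Xv m)"
    by (subst pm_expand[of p]) (simp add: pmon_Xv cst_single)
  also have "\<dots> = (\<Sum>m\<in>ks p. cst (lk p m) * pmon (\<phi> \<circ> Xv) m)"
    by (simp add: s mul c pmon_def pr pw)
  also have "\<dots> = psubst (\<phi> \<circ> Xv) p" by (simp add: psubst_alt)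
  finally show ?thesis .
qed

lemma psubst_comp: "psubst \<sigma> (psubst \<tau> p) = psubst (psubst \<sigma> \<circ> \<tau>) p"
proof -
  have "(psubst \<sigma> \<circ> psubst \<tau>) p = psubst ((psubst \<sigma> \<circ> psubst \<tau>) \<circ> Xv) p"
    by (rule hom_eq_psubst) (simp_all add: psubst_add psubst_mult)
  then show ?thesis by (simp add: comp_def)
qed

lemma psubst_cong: "(\<And>m v. m \<in> ks p \<Longrightarrow> v \<in> ks m \<Longrightarrow> \<sigma> v = \<tau> v) \<Longrightarrow> psubst \<sigma> p = psubst \<tau> p"
  unfolding psubst_def by (intro sum.cong refl arg_cong2[where f="(*)"] prod.cong) auto




definition degw :: "('v::finite \<Rightarrow> nat) \<Rightarrow> ('v \<Rightarrow>\<^sub>0 nat) \<Rightarrow> nat" where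
  "degw w m = (\<Sum>v\<in>UNIV. w v * lk m v)"
definition homw :: "('v::finite \<Rightarrow> nat) \<Rightarrow> nat \<Rightarrow> (('v \<Rightarrow>\<^sub>0 nat) \<Rightarrow>\<^sub>0 'k::zero) \<Rightarrow> bool" where
  "homw w e p \<longleftrightarrow> (\<forall>m\<in>ks p. degw w m = e)"

lemma degw_add: "degw w (a+b) = degw w a + degw w b"
  by (simp add: degw_def lookup_add algebra_simps sum.distrib)
lemma degw_0[simp]: "degw w 0 = 0" by (simp add: degw_def)
lemma degw_single: "degw w (Poly_Mapping.single v k) = w v * k"
  by (simp add: degw_def lookup_single when_def if_distrib cong: if_cong)
lemma degw_keys: "degw w m = (\<Sum>v\<in>ks m. w v * lk m v)"
  unfolding degw_def by (rule sum.mono_neutral_right) (auto simp: in_keys_iff)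
lemma degw_zero_w[simp]: "degw (\<lambda>_. 0) m = 0" by (simp add: degw_def)

lemma homw_0[simp]: "homw w e 0" by (simp add: homw_def)
lemma homw_add: "homw w e p \<Longrightarrow> homw w e q \<Longrightarrow> homw w e (p+q)"
  unfolding homw_def using keys_add[of p q] by blast
lemma homw_sum: "(\<And>a. a\<in>A \<Longrightarrow> homw w e (f a)) \<Longrightarrow> homw w e (sum f A)"
  by (induction A rule: infinite_finite_induct) (auto intro: homw_add)
lemma homw_mult: "homw w e p \<Longrightarrow> homw w e' q \<Longrightarrow> homw w (e+e') (p*q)"
  unfolding homw_def using keys_mult[of p q] by (force simp: degw_add)
lemma homw_one[simp]: "homw w 0 1" by (simp add: homw_def)
lemma homw_pow: "homw w e p \<Longrightarrow> homw w (k*e) (p^k)"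
  by (induction k) (simp_all add: homw_mult)
lemma homw_prod: "(\<And>a. a\<in>A \<Longrightarrow> homw w (g a) (f a)) \<Longrightarrow> homw w (\<Sum>a\<in>A. g a) (prod f A)"
  by (induction A rule: infinite_finite_induct) (auto intro: homw_mult)
lemma homw_single: "homw w (degw w m) (Poly_Mapping.single m c)"
  by (simp add: homw_def)
lemma homw_cst[simp]: "homw w 0 (cst c)" by (simp add: cst_def homw_def)
lemma homw_cst_mult: "homw w e p \<Longrightarrow> homw w e (cst c * p)"
  using homw_mult[of w 0 "cst c" e p] by simp
lemma homw_Xv: "homw w (w v) (Xv v)" by (simp add: Xv_def homw_def degw_single)
lemma homw_mon: "(\<And>v. homw w (u v) (\<sigma> v)) \<Longrightarrow> homw w (degw u m) (pmon \<sigma> m)"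
  unfolding pmon_def degw_keys by (rule homw_prod) (metis homw_pow mult.commute)
lemma homw_psubst: "homw u e p \<Longrightarrow> (\<And>v. homw w (u v) (\<sigma> v)) \<Longrightarrow> homw w e (psubst \<sigma> p)"
  unfolding psubst_alt
  by (rule homw_sum) (metis homw_def homw_cst_mult homw_mon)
lemma homw_lookup: "homw w e p \<Longrightarrow> degw w m \<noteq> e \<Longrightarrow> lk p m = 0"
  by (auto simp: homw_def in_keys_iff)

definition wv :: "nat \<Rightarrow> 'n option \<Rightarrow> nat" where
  "wv r v = (case v of Some _ \<Rightarrow> 1 | None \<Rightarrow> r)"
definition nyw :: "'n option \<Rightarrow> nat" where
  "nyw v = (case v of Some _ \<Rightarrow> 0 | None \<Rightarrow> 1)"

lemma sum_UNIV_opt: "(\<Sum>v\<in>(UNIV::'n::finite option set). f v) = f None + (\<Sum>i\<in>UNIV. f (Some i))"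
  by (simp add: UNIV_option_conv sum.reindex)

lemma wdeg_degw: "wdeg r m = degw (wv r) m"
  by (simp add: wdeg_def degw_def sum_UNIV_opt wv_def)
lemma homog_homw: "homog r e p = homw (wv r) e p"
  by (simp add: homog_def homw_def wdeg_degw)
lemma degw_nyw: "degw nyw (m :: 'n::finite option \<Rightarrow>\<^sub>0 nat) = lk m None"
  by (simp add: degw_def sum_UNIV_opt nyw_def)

lemma Hr_iff: "h \<in> Hr r \<longleftrightarrow> homw (wv r) r h \<and> homw nyw 0 h"
  by (auto simp: Hr_def homw_def wdeg_degw degw_nyw)




definition sig :: "'k^'n^'n \<Rightarrow> 'k \<Rightarrow> ('n::finite,'k::comm_ring_1) wpoly \<Rightarrow> 'n option \<Rightarrow> ('n,'k) wpoly" where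
  "sig A c h = (\<lambda>v. case v of Some i \<Rightarrow> (\<Sum>j\<in>UNIV. cst (A $ j $ i) * Xv (Some j)) | None \<Rightarrow> cst c * Xv None + h)"

lemma Phi_sig: "Phi A c h = psubst (sig A c h)" by (simp add: Phi_def sig_def)
lemma sig_Some[simp]: "sig A c h (Some i) = (\<Sum>j\<in>UNIV. cst (A $ j $ i) * Xv (Some j))" by (simp add: sig_def)
lemma sig_None[simp]: "sig A c h None = cst c * Xv None + h" by (simp add: sig_def)

lemma cst_sum: "cst (sum f A) = (\<Sum>a\<in>A. cst (f a))"
  by (induction A rule: infinite_finite_induct) (simp_all add: cst_add)

lemma Phi_id: "Phi (mat 1) 1 (0::('n::finite,'k::comm_ring_1) wpoly) = id"
proof -
  have "sig (mat 1) 1 0 = (Xv :: _ \<Rightarrow> ('n::finite,'k::comm_ring_1) wpoly)"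
  proof
    fix v :: "'n option"
    show "sig (mat 1) 1 0 v = (Xv v :: ('n,'k) wpoly)"
    proof (cases v)
      case (Some a)
      have "(\<Sum>j\<in>UNIV. cst (mat 1 $ j $ a) * Xv (Some j)) = (\<Sum>j\<in>UNIV. if j = a then Xv (Some a) else (0::('n,'k) wpoly))"
        by (rule sum.cong) (auto simp: mat_def)
      then show ?thesis unfolding Some sig_Some by simp
    qed simp
  qed
  then show ?thesis by (simp add: Phi_sig) (simp add: fun_eq_iff psubst_Xv_id)
qed

lemma homw_lin: "homw w 1 (\<Sum>j\<in>UNIV. cst (a j) * Xv (Some j))" if "\<And>j. w (Some j) = 1"
  by (rule homw_sum) (metis homw_Xv homw_cst_mult that)

lemma sig_homw: fixes h :: "('n::finite,'k::comm_ring_1) wpoly" assumes "h \<in> Hr r" shows "homw (wv r) (wv r v) (sig A c h v)"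
proof (cases v)
  case None
  have "homw (wv r) r (cst c * Xv None :: ('n,'k) wpoly)" using homw_Xv[of "wv r" None] by (intro homw_cst_mult) (simp add: wv_def)
  moreover have "homw (wv r) r h" using assms by (simp add: Hr_iff)
  ultimately show ?thesis unfolding None sig_None wv_def by (simp add: homw_add)
next
  case (Some i)
  have w1: "wv r (Some i) = 1" by (simp add: wv_def)
  show ?thesis unfolding Some sig_Some w1 by (rule homw_lin) (simp add: wv_def)
qed

lemma sig_nyw: "homw nyw (nyw v) (sig A c (0::('n::finite,'k::comm_ring_1) wpoly) v)"
proof (cases v)
  case None
  have "homw nyw 1 (cst c * Xv None :: ('n,'k) wpoly)" using homw_Xv[of nyw None] by (intro homw_cst_mult) (simp add: nyw_def)
  then show ?thesis unfolding None sig_None by (simp add: nyw_def)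
next
  case (Some i)
  have "homw nyw 0 (cst (A $ j $ i) * Xv (Some j))" for j
    using homw_Xv[of nyw "Some j"] by (intro homw_cst_mult) (simp add: nyw_def)
  then have "homw nyw 0 (sig A c 0 (Some i))" unfolding sig_Some by (intro homw_sum)
  then show ?thesis using Some by (simp add: nyw_def)
qed

lemma sig_nyw0: assumes "h \<in> Hr r" shows "homw nyw 0 (sig A 0 h v)"
proof (cases v)
  case None
  then show ?thesis using assms by (simp add: Hr_iff)
next
  case (Some i)
  have "homw nyw 0 (cst (A $ j $ i) * Xv (Some j))" for j
    using homw_Xv[of nyw "Some j"] by (intro homw_cst_mult) (simp add: nyw_def)
  then show ?thesis unfolding Some sig_Some by (intro homw_sum)
qed

lemma psubst_Hr: assumes "h \<in> Hr r" "\<And>i. \<sigma> (Some i) = \<tau> (Some i)" shows "psubst \<sigma> h = psubst \<tau> h"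
proof (rule psubst_cong)
  fix m v assume m: "m \<in> ks h" and v: "v \<in> ks m"
  have "lk m None = 0" using assms(1) m by (simp add: Hr_def)
  then have "v \<noteq> None" using v in_keys_iff by metis
  then obtain i where "v = Some i" by (cases v) auto
  then show "\<sigma> v = \<tau> v" using assms(2) by simp
qed

lemma Phi_Hr: "h \<in> Hr r \<Longrightarrow> Phi A c h' h = Phi A 1 0 h"
  unfolding Phi_sig by (rule psubst_Hr) auto

lemma Hr_0[simp]: "0 \<in> Hr r" by (simp add: Hr_def)
lemma Hr_add: "h \<in> Hr r \<Longrightarrow> h' \<in> Hr r \<Longrightarrow> h + h' \<in> Hr r"
  by (simp add: Hr_iff homw_add)
lemma Hr_cst: "h \<in> Hr r \<Longrightarrow> cst a * h \<in> Hr r"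
  by (simp add: Hr_iff homw_cst_mult)
lemma Hr_Phi: "h \<in> Hr r \<Longrightarrow> Phi A 1 0 h \<in> Hr r"
  unfolding Hr_iff Phi_sig
proof
  assume h: "homw (wv r) r h \<and> homw nyw 0 h"
  show "homw (wv r) r (psubst (sig A 1 0) h)"
    by (rule homw_psubst[where u="wv r"]) (use h sig_homw[OF Hr_0] in auto)
  show "homw nyw 0 (psubst (sig A 1 0) h)"
    by (rule homw_psubst[where u=nyw]) (use h sig_nyw in auto)
qed

lemma Phi_comp:
  assumes h': "h' \<in> Hr r"
  shows "Phi A c h \<circ> Phi A' c' h' = Phi (A ** A') (c*c') (cst c' * h + Phi A 1 0 h')"
proof -
  have eq: "psubst (sig A c h) \<circ> sig A' c' h' = sig (A ** A') (c*c') (cst c' * h + Phi A 1 0 h')"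
  proof
    fix v show "(psubst (sig A c h) \<circ> sig A' c' h') v = sig (A ** A') (c*c') (cst c' * h + Phi A 1 0 h') v"
    proof (cases v)
      case None
      have "psubst (sig A c h) h' = Phi A 1 0 h'"
        using Phi_Hr[OF h', of A c h] by (simp add: Phi_sig)
      then show ?thesis using None
        by (simp add: psubst_add psubst_mult algebra_simps cst_mult[symmetric])
    next
      case (Some i)
      have "(psubst (sig A c h) \<circ> sig A' c' h') v = (\<Sum>j\<in>UNIV. cst (A' $ j $ i) * (\<Sum>k\<in>UNIV. cst (A $ k $ j) * Xv (Some k)))"
        using Some by (simp add: psubst_sum psubst_mult)
      also have "\<dots> = (\<Sum>j\<in>UNIV. \<Sum>k\<in>UNIV. cst (A $ k $ j * A' $ j $ i) * Xv (Some k))"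
        by (simp add: sum_distrib_left cst_mult[symmetric] mult_ac)
      also have "\<dots> = (\<Sum>k\<in>UNIV. \<Sum>j\<in>UNIV. cst (A $ k $ j * A' $ j $ i) * Xv (Some k))"
        by (rule sum.swap)
      also have "\<dots> = sig (A ** A') (c*c') (cst c' * h + Phi A 1 0 h') v"
        using Some by (simp add: matrix_matrix_mult_def cst_sum sum_distrib_right)
      finally show ?thesis .
    qed
  qed
  show ?thesis unfolding Phi_sig by (rule ext) (simp add: psubst_comp eq[unfolded Phi_sig])
qed




lemma single_key_eq: "Poly_Mapping.single a (1::nat) = Poly_Mapping.single b 1 \<longleftrightarrow> a = b"
  by (metis lookup_single_eq lookup_single_not_eq one_neq_zero)

lemma single_key_eq'[simp]: "Poly_Mapping.single a (Suc 0) = Poly_Mapping.single b (Suc 0) \<longleftrightarrow> a = b"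
  using single_key_eq by simp

lemma cst_Xv: "cst a * Xv v = Poly_Mapping.single (Poly_Mapping.single v 1) a"
  by (simp add: Xv_def cst_single)

lemma lookup_lin: "lk (\<Sum>j\<in>UNIV. cst (a j) * Xv (Some j) :: ('n::finite,'k::comm_ring_1) wpoly) (Poly_Mapping.single (Some k) 1) = a k"
proof -
  have "lk (\<Sum>j\<in>UNIV. cst (a j) * Xv (Some j) :: ('n,'k) wpoly) (Poly_Mapping.single (Some k) 1)
      = (\<Sum>j\<in>UNIV. if j = k then a j else 0)"
    by (simp add: cst_Xv lookup_sum lookup_single when_def single_key_eq)
  then show ?thesis by simp
qed

lemma Phi_0[simp]: "Phi A c h 0 = 0" by (simp add: Phi_sig)
lemma Phi_cst_mult: "Phi A c h (cst a * q) = cst a * Phi A c h q"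
  by (simp add: Phi_sig psubst_mult)

lemma gr_aut_Phi:
  fixes A :: "'k::field^'n::finite^'n" and h :: "('n,'k) wpoly"
  assumes A: "invertible A" and c: "c \<noteq> 0" and h: "h \<in> Hr r"
  shows "gr_aut r (Phi A c h)"
proof -
  obtain B where AB: "A ** B = mat 1" and BA: "B ** A = mat 1" using A invertible_def by blast
  define h2 where "h2 = cst (- inverse c) * Phi B 1 0 h"
  have h2: "h2 \<in> Hr r" using h by (simp add: h2_def Hr_cst Hr_Phi)
  have PAB: "Phi A 1 0 (Phi B 1 0 q) = q" for q
    using fun_cong[OF Phi_comp[OF Hr_0, of A 1 0 B 1], of q] AB by (simp add: Phi_id)
  have 1: "Phi A c h \<circ> Phi B (inverse c) h2 = id"
  proof -
    have "cst (inverse c) * h + Phi A 1 0 h2 = cst (inverse c) * h + cst (- inverse c) * h"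
      by (simp add: h2_def Phi_cst_mult PAB)
    also have "\<dots> = cst (inverse c + - inverse c) * h" by (simp only: cst_add distrib_right)
    also have "\<dots> = 0" by simp
    finally show ?thesis using Phi_comp[OF h2, of A c h B "inverse c"] AB c by (simp add: Phi_id)
  qed
  have 2: "Phi B (inverse c) h2 \<circ> Phi A c h = id"
  proof -
    have "cst c * h2 + Phi B 1 0 h = cst (c * - inverse c) * Phi B 1 0 h + cst 1 * Phi B 1 0 h"
      by (simp add: h2_def mult.assoc[symmetric] cst_mult)
    also have "\<dots> = cst (c * - inverse c + 1) * Phi B 1 0 h" by (simp only: cst_add distrib_right)
    also have "\<dots> = 0" using c by simp
    finally show ?thesis using Phi_comp[OF h, of B "inverse c" h2 A c] BA c by (simp add: Phi_id)
  qed
  have "bij (Phi A c h)" using o_bij[OF 2 1] .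
  moreover have "homog r e p \<longrightarrow> homog r e (Phi A c h p)" for e p
    unfolding homog_homw Phi_sig using homw_psubst[of "wv r" e p "wv r" "sig A c h"] sig_homw[OF h] by blast
  ultimately show ?thesis
    unfolding gr_aut_def by (simp add: Phi_sig psubst_add psubst_mult)
qed

lemma Phi_hom: "(\<lambda>(A,c,h). Phi A c h) \<in> hom (SemiDir r) (AutGr r :: (('n::finite,'k::field) wpoly \<Rightarrow> _) monoid)"
  unfolding hom_def
  by (auto simp: SemiDir_def AutGr_def gr_aut_Phi Phi_comp)

lemma Phi_inj:
  fixes h :: "('n::finite,'k::field) wpoly"
  assumes "h \<in> Hr r" "h' \<in> Hr r" "Phi A c h = Phi A' c' h'"
  shows "A = A' \<and> c = c' \<and> h = h'"
proof -
  have s: "sig A c h v = sig A' c' h' v" for v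
    using fun_cong[OF assms(3), of "Xv v"] by (simp add: Phi_sig)
  have "A $ j $ i = A' $ j $ i" for i j
    using arg_cong[OF s[of "Some i"], of "\<lambda>q. lk q (Poly_Mapping.single (Some j) 1)"]
    by (simp only: sig_Some lookup_lin)
  hence A: "A = A'" by (simp add: vec_eq_iff)
  have z: "lk g (Poly_Mapping.single None 1) = 0" if "g \<in> Hr r" for g :: "('n,'k) wpoly"
  proof (rule ccontr)
    assume "lk g (Poly_Mapping.single None 1) \<noteq> 0"
    then have "Poly_Mapping.single None 1 \<in> ks g" by (simp add: in_keys_iff)
    moreover from that have "\<forall>m\<in>ks g. lk m None = 0" by (simp add: Hr_def)
    ultimately have "lk (Poly_Mapping.single (None::'n option) (1::nat)) None = 0" by blast
    then show False by simp
  qed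
  have "c = c'"
    using arg_cong[OF s[of None], of "\<lambda>q. lk q (Poly_Mapping.single None 1)"] z[OF assms(1)] z[OF assms(2)]
    by (simp add: lookup_add cst_Xv)
  with s[of None] A show ?thesis by simp
qed




lemma degw_wv: "degw (wv r) (m::'n::finite option \<Rightarrow>\<^sub>0 nat) = r * lk m None + (\<Sum>i\<in>UNIV. lk m (Some i))"
  by (simp add: degw_def sum_UNIV_opt wv_def)

lemma nat_sum_eq1:
  fixes f :: "'a::finite \<Rightarrow> nat"
  assumes "(\<Sum>i\<in>UNIV. f i) = 1"
  shows "\<exists>j. f j = 1 \<and> (\<forall>i. i \<noteq> j \<longrightarrow> f i = 0)"
proof -
  obtain j where j: "f j \<noteq> 0" using assms by (metis sum.neutral one_neq_zero)
  have "(\<Sum>i\<in>UNIV. f i) = f j + (\<Sum>i\<in>UNIV - {j}. f i)"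
    by (simp add: sum.remove)
  then have "f j = 1" "(\<Sum>i\<in>UNIV - {j}. f i) = 0" using assms j by linarith+
  then show ?thesis by auto
qed

lemma wdeg1:
  assumes "r > 1" "degw (wv r) (m::'n::finite option \<Rightarrow>\<^sub>0 nat) = 1"
  shows "\<exists>j. m = Poly_Mapping.single (Some j) 1"
proof -
  have "lk m None = 0" using assms unfolding degw_wv
    by (metis add_eq_0_iff_both_eq_0 le_add1 less_one mult_eq_0_iff nat_less_le nat_mult_le_cancel1 not_less_zero  mult_1_right le_trans not_le zero_less_one)
  then have "(\<Sum>i\<in>UNIV. lk m (Some i)) = 1" using assms unfolding degw_wv by simp
  then obtain j where j: "lk m (Some j) = 1" "\<And>i. i \<noteq> j \<Longrightarrow> lk m (Some i) = 0"
    using nat_sum_eq1[of "\<lambda>i. lk m (Some i)"] by blast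
  have "m = Poly_Mapping.single (Some j) 1"
  proof (rule poly_mapping_eqI)
    fix v show "lk m v = lk (Poly_Mapping.single (Some j) 1) v"
      using j \<open>lk m None = 0\<close> by (cases v) (auto simp: lookup_single when_def)
  qed
  then show ?thesis ..
qed

lemma wdegr:
  assumes "r > 0" "degw (wv r) (m::'n::finite option \<Rightarrow>\<^sub>0 nat) = r" "m \<noteq> Poly_Mapping.single None 1"
  shows "lk m None = 0"
proof (rule ccontr)
  assume "lk m None \<noteq> 0"
  then have "r * lk m None \<ge> r" using assms(1) by simp
  then have "lk m None = 1" "(\<Sum>i\<in>UNIV. lk m (Some i)) = 0" using assms(1,2) \<open>lk m None \<noteq> 0\<close> unfolding degw_wv
    by (metis add_leD1 le_antisym mult_le_cancel1 not_less_zero nat_mult_1_right not_gr_zero Suc_leI neq0_conv le_add1 add_cancel_right_right One_nat_def)+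
  then have "m = Poly_Mapping.single None 1"
  proof (intro poly_mapping_eqI)
    fix v assume "lk m None = 1" "(\<Sum>i\<in>UNIV. lk m (Some i)) = 0"
    then show "lk m v = lk (Poly_Mapping.single None 1) v" by (cases v) (auto simp: lookup_single)
  qed
  with assms(3) show False ..
qed

lemma lin_repr:
  fixes q :: "('n::finite,'k::comm_ring_1) wpoly"
  assumes r: "r > 1" and q: "homw (wv r) 1 q"
  shows "q = (\<Sum>j\<in>UNIV. cst (lk q (Poly_Mapping.single (Some j) 1)) * Xv (Some j))"
proof (rule poly_mapping_eqI)
  fix m
  have e: "lk (\<Sum>j\<in>UNIV. cst (lk q (Poly_Mapping.single (Some j) 1)) * Xv (Some j)) m
      = (\<Sum>j\<in>UNIV. if Poly_Mapping.single (Some j) 1 = m then lk q m else 0)"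
    by (auto simp: cst_Xv lookup_sum lookup_single when_def intro: sum.cong)
  show "lk q m = lk (\<Sum>j\<in>UNIV. cst (lk q (Poly_Mapping.single (Some j) 1)) * Xv (Some j)) m"
  proof (cases "\<exists>j. m = Poly_Mapping.single (Some j) 1")
    case True
    then obtain j0 where j0: "m = Poly_Mapping.single (Some j0) 1" by blast
    have "(\<Sum>j\<in>UNIV. if Poly_Mapping.single (Some j) 1 = m then lk q m else 0) = (\<Sum>j\<in>UNIV. if j = j0 then lk q m else 0)"
      using j0 by (intro sum.cong) auto
    then show ?thesis using e by simp
  next
    case False
    then have "m \<notin> ks q" using q wdeg1[OF r] by (auto simp: homw_def)
    then have z: "lk q m = 0" by (simp add: in_keys_iff)
    show ?thesis unfolding e z by simp
  qed
qed




lemma gr_aut_surj: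
  fixes \<phi> :: "('n::finite,'k::field) wpoly \<Rightarrow> ('n,'k) wpoly"
  assumes r: "r > 1" and g: "gr_aut r \<phi>"
  shows "\<exists>A c h. invertible A \<and> c \<noteq> 0 \<and> h \<in> Hr r \<and> \<phi> = Phi A c h"
proof -
  have add: "\<And>p q. \<phi> (p+q) = \<phi> p + \<phi> q" and mul: "\<And>p q. \<phi> (p*q) = \<phi> p * \<phi> q"
    and cs: "\<And>a. \<phi> (cst a) = cst a" and bj: "bij \<phi>" and hg: "\<And>e p. homog r e p \<Longrightarrow> homog r e (\<phi> p)"
    using g unfolding gr_aut_def by blast+
  have hphi: "\<phi> = psubst (\<phi> \<circ> Xv)" by (rule ext) (rule hom_eq_psubst[OF add mul cs])
  have hx: "homw (wv r) 1 (\<phi> (Xv (Some i)))" for i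
    using hg[of 1 "Xv (Some i)"] homw_Xv[of "wv r" "Some i"] by (simp add: homog_homw wv_def)
  have hy: "homw (wv r) r (\<phi> (Xv None))"
    using hg[of r "Xv None"] homw_Xv[of "wv r" "None"] by (simp add: homog_homw wv_def)
  define A :: "'k^'n^'n" where "A = (\<chi> j i. lk (\<phi> (Xv (Some i))) (Poly_Mapping.single (Some j) 1))"
  define c where "c = lk (\<phi> (Xv None)) (Poly_Mapping.single None 1)"
  define h where "h = \<phi> (Xv None) - cst c * Xv None"
  have sig_eq: "sig A c h = \<phi> \<circ> Xv"
  proof
    fix v show "sig A c h v = (\<phi> \<circ> Xv) v"
    proof (cases v)
      case None then show ?thesis by (simp add: h_def)
    next
      case (Some i)
      show ?thesis unfolding Some sig_Some A_def comp_apply vec_lambda_beta by (rule lin_repr[OF r hx, symmetric])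
    qed
  qed
  have Phi_eq: "\<phi> = Phi A c h" unfolding Phi_sig sig_eq by (rule hphi)
  have hHr: "h \<in> Hr r"
    unfolding Hr_def
  proof safe
    fix m assume m: "m \<in> ks h"
    have lh: "lk h m = lk (\<phi> (Xv None)) m - (c when Poly_Mapping.single None 1 = m)"
      by (simp add: h_def lookup_minus cst_Xv lookup_single)
    have mne: "m \<noteq> Poly_Mapping.single None 1"
    proof
      assume "m = Poly_Mapping.single None 1"
      then have "lk h m = 0" using lh by (simp add: c_def)
      with m show False by (simp add: in_keys_iff)
    qed
    then have "lk (\<phi> (Xv None)) m \<noteq> 0" using lh m by (simp add: in_keys_iff)
    then have dm: "degw (wv r) m = r" using hy by (auto simp: homw_def in_keys_iff)
    then show "wdeg r m = r" by (simp add: wdeg_degw)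
    show "lk m None = 0" using wdegr[of r m] r dm mne by simp
  qed
  have surjp: "\<exists>p. \<phi> p = q" for q using bj by (metis bij_pointE)
  have c0: "c \<noteq> 0"
  proof
    assume c: "c = 0"
    obtain p where p: "\<phi> p = Xv None" using surjp by blast
    have "homw nyw 0 (\<phi> p)" unfolding Phi_eq Phi_sig c
      by (rule homw_psubst[where u="\<lambda>_. 0"]) (simp add: homw_def, rule sig_nyw0[OF hHr])
    then show False using p by (simp add: homw_def Xv_def degw_nyw)
  qed
  have Ainv: "invertible A"
  proof (rule ccontr)
    assume "\<not> invertible A"
    then have "\<not> (\<forall>cv. (\<Sum>i\<in>UNIV. cv i *s row i A) = 0 \<longrightarrow> (\<forall>i. cv i = 0))"
      using invertible_right_inverse[of A] matrix_right_invertible_independent_rows[of A] by blast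
    then obtain cv i0 where cv: "(\<Sum>i\<in>UNIV. cv i *s row i A) = 0" and i0: "cv i0 \<noteq> 0" by blast
    have cvk: "(\<Sum>j\<in>UNIV. cv j * A $ j $ k) = 0" for k
      using arg_cong[OF cv, of "\<lambda>v. v $ k"] by (simp add: row_def)
    define L where "L q = (\<Sum>j\<in>UNIV. cv j * lk q (Poly_Mapping.single (Some j) 1))" for q :: "('n,'k) wpoly"
    have Lmon: "L (pmon (sig A c h) m) = 0" for m
    proof (cases "degw (wv r) m = 1")
      case True
      then obtain i where i: "m = Poly_Mapping.single (Some i) 1" using wdeg1[OF r] by blast
      have "L (pmon (sig A c h) m) = (\<Sum>j\<in>UNIV. cv j * A $ j $ i)"
        unfolding i pmon_single L_def by (simp add: lookup_lin[simplified])
      then show ?thesis using cvk by simp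
    next
      case False
      have hm: "homw (wv r) (degw (wv r) m) (pmon (sig A c h) m)"
        by (rule homw_mon) (rule sig_homw[OF hHr])
      then have "lk (pmon (sig A c h) m) (Poly_Mapping.single (Some j) 1) = 0" for j
        using homw_lookup[OF hm, of "Poly_Mapping.single (Some j) 1"] False by (simp add: degw_single wv_def)
      then show ?thesis by (simp add: L_def)
    qed
    have "L (\<phi> p) = 0" for p
    proof -
      let ?M = "pmon (sig A c h)"
      have "L (\<phi> p) = (\<Sum>j\<in>UNIV. \<Sum>m\<in>ks p. cv j * (lk p m * lk (?M m) (Poly_Mapping.single (Some j) 1)))"
        unfolding Phi_eq Phi_sig psubst_alt L_def
        by (simp add: lookup_sum lookup_cst_mult sum_distrib_left)
      also have "\<dots> = (\<Sum>m\<in>ks p. \<Sum>j\<in>UNIV. cv j * (lk p m * lk (?M m) (Poly_Mapping.single (Some j) 1)))"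
        by (rule sum.swap)
      also have "\<dots> = (\<Sum>m\<in>ks p. lk p m * L (?M m))"
        by (simp add: L_def sum_distrib_left mult_ac)
      finally have "L (\<phi> p) = (\<Sum>m\<in>ks p. lk p m * L (pmon (sig A c h) m))" .
      then show ?thesis by (simp add: Lmon)
    qed
    moreover obtain p where "\<phi> p = Xv (Some i0)" using surjp by blast
    moreover have "L (Xv (Some i0)) = cv i0"
    proof -
      have "L (Xv (Some i0)) = (\<Sum>j\<in>UNIV. if j = i0 then cv j else 0)"
        unfolding L_def by (intro sum.cong) (auto simp: Xv_def lookup_single)
      then show ?thesis by simp
    qed
    ultimately show False using i0 by metis
  qed
  show ?thesis using Ainv c0 hHr Phi_eq by blast
qed




lemma Phi_iso:
  assumes r: "r > 1"
  shows "(\<lambda>(A,c,h). Phi A c h) \<in> iso (SemiDir r) (AutGr r :: (('n::finite,'k::field) wpoly \<Rightarrow> _) monoid)"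
  unfolding iso_def
proof (intro CollectI conjI)
  show "(\<lambda>(A,c,h). Phi A c h) \<in> hom (SemiDir r) (AutGr r :: (('n::finite,'k::field) wpoly \<Rightarrow> _) monoid)"
    by (rule Phi_hom)
  show "bij_betw (\<lambda>(A,c,h). Phi A c h) (carrier (SemiDir r)) (carrier (AutGr r :: (('n::finite,'k::field) wpoly \<Rightarrow> _) monoid))"
    unfolding bij_betw_def
  proof
    show "inj_on (\<lambda>(A,c,h). Phi A c h) (carrier (SemiDir r))"
      unfolding inj_on_def SemiDir_def using Phi_inj by fastforce
    show "(\<lambda>(A,c,h). Phi A c h) ` carrier (SemiDir r) = carrier (AutGr r :: (('n::finite,'k::field) wpoly \<Rightarrow> _) monoid)"
    proof
      show "(\<lambda>(A,c,h). Phi A c h) ` carrier (SemiDir r) \<subseteq> carrier (AutGr r :: (('n::finite,'k::field) wpoly \<Rightarrow> _) monoid)"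
        by (auto simp: SemiDir_def AutGr_def gr_aut_Phi)
      show "carrier (AutGr r :: (('n::finite,'k::field) wpoly \<Rightarrow> _) monoid) \<subseteq> (\<lambda>(A,c,h). Phi A c h) ` carrier (SemiDir r)"
      proof
        fix \<phi> assume "\<phi> \<in> carrier (AutGr r :: (('n::finite,'k::field) wpoly \<Rightarrow> _) monoid)"
        then have "gr_aut r \<phi>" by (simp add: AutGr_def)
        then obtain A c h where "invertible A" "c \<noteq> 0" "h \<in> Hr r" "\<phi> = Phi A c h"
          using gr_aut_surj[OF r] by blast
        then show "\<phi> \<in> (\<lambda>(A,c,h). Phi A c h) ` carrier (SemiDir r)"
          by (force simp: SemiDir_def)
      qed
    qed
  qed
qed

lemma Urad_comm:
  fixes u v :: "('n::finite,'k::field) wpoly \<Rightarrow> _"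
  assumes "u \<in> Urad r" "v \<in> Urad r" shows "u \<circ> v = v \<circ> u"
proof -
  obtain h where h: "h \<in> Hr r" "u = Phi (mat 1) 1 h" using assms(1) by (auto simp: Urad_def)
  obtain h' where h': "h' \<in> Hr r" "v = Phi (mat 1) 1 h'" using assms(2) by (auto simp: Urad_def)
  have "u \<circ> v = Phi (mat 1) 1 (h + h')"
    using Phi_comp[OF h'(1), of "mat 1" 1 h "mat 1" 1] h'(2) h(2) by (simp add: Phi_id)
  moreover have "v \<circ> u = Phi (mat 1) 1 (h' + h)"
    using Phi_comp[OF h(1), of "mat 1" 1 h' "mat 1" 1] h'(2) h(2) by (simp add: Phi_id)
  ultimately show ?thesis by (simp add: add.commute)
qed


lemma card_xmonos: "card (xmonos r :: ('n::finite option \<Rightarrow>\<^sub>0 nat) set) = (CARD('n) - 1 + r) choose r"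
proof -
  let ?n = "CARD('n)"
  obtain e :: "nat \<Rightarrow> 'n" where e: "bij_betw e {0..<?n} UNIV"
    using ex_bij_betw_nat_finite[of "UNIV :: 'n set"] by auto
  define ie where "ie = inv_into {0..<?n} e"
  have ie0: "ie j \<in> {0..<?n}" for j
    unfolding ie_def by (rule inv_into_into) (use e in \<open>auto simp: bij_betw_def\<close>)
  have ie1: "ie j < ?n" "e (ie j) = j" for j
    using ie0[of j] e unfolding ie_def bij_betw_def by (auto intro: f_inv_into_f)
  have ie2: "k < ?n \<Longrightarrow> ie (e k) = k" for k
    using e unfolding ie_def bij_betw_def by (auto intro: inv_into_f_f)
  have reidx: "(\<Sum>k\<in>{0..<?n}. g (e k)) = (\<Sum>j\<in>UNIV. g j)" for g :: "'n \<Rightarrow> nat"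
    using sum.reindex_bij_betw[OF e, of g] .
  define mk :: "nat list \<Rightarrow> ('n option \<Rightarrow>\<^sub>0 nat)" where
    "mk l = Abs_poly_mapping (\<lambda>v. case v of None \<Rightarrow> 0 | Some j \<Rightarrow> l ! ie j)" for l
  have lmk: "lk (mk l) v = (case v of None \<Rightarrow> 0 | Some j \<Rightarrow> l ! ie j)" for l v
    unfolding mk_def by (subst lookup_Abs_poly_mapping) simp_all
  define L where "L = {l::nat list. length l = ?n \<and> sum_list l = r}"
  have sl: "sum_list l = (\<Sum>j\<in>UNIV. l ! ie j)" if "length l = ?n" for l :: "nat list"
  proof -
    have "(\<Sum>k=0..<?n. l ! ie (e k)) = (\<Sum>k=0..<?n. l ! k)" by (rule sum.cong) (auto simp: ie2)
    then show ?thesis using reidx[of "\<lambda>j. l ! ie j"] that by (simp add: sum_list_sum_nth)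
  qed
  have inj: "inj_on mk L"
  proof
    fix l l' assume l: "l \<in> L" and l': "l' \<in> L" and eq: "mk l = mk l'"
    have "l ! k = l' ! k" if "k < ?n" for k
      using arg_cong[OF eq, of "\<lambda>m. lk m (Some (e k))"] that by (simp add: lmk ie2)
    then show "l = l'" using l l' by (intro nth_equalityI) (auto simp: L_def)
  qed
  have img: "xmonos r = mk ` L"
  proof
    show "mk ` L \<subseteq> xmonos r"
    proof
      fix m :: "'n option \<Rightarrow>\<^sub>0 nat" assume "m \<in> mk ` L"
      then obtain l where l: "l \<in> L" "m = mk l" by blast
      then show "m \<in> xmonos r"
        using sl[of l] by (simp add: xmonos_def wdeg_def lmk L_def)
    qed
    show "xmonos r \<subseteq> mk ` L"
    proof
      fix m :: "'n option \<Rightarrow>\<^sub>0 nat" assume m: "m \<in> xmonos r"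
      define l where "l = map (\<lambda>k. lk m (Some (e k))) [0..<?n]"
      have ll: "length l = ?n" by (simp add: l_def)
      have "mk l = m"
      proof (rule poly_mapping_eqI)
        fix v show "lk (mk l) v = lk m v"
          using m ie1 by (cases v) (auto simp: lmk l_def xmonos_def)
      qed
      moreover have "sum_list l = r"
      proof -
        have s1: "(\<Sum>j\<in>UNIV. lk m (Some j)) = r" using m unfolding xmonos_def wdeg_def mem_Collect_eq by (metis add.right_neutral mult_0_right)
        show ?thesis using sl[OF ll] ie1 by (simp add: l_def s1)
      qed
      ultimately show "m \<in> mk ` L" using ll by (auto simp: L_def)
    qed
  qed
  have "card (xmonos r :: ('n option \<Rightarrow>\<^sub>0 nat) set) = card L" using img inj by (simp add: card_image)
  also have "\<dots> = (r + ?n - 1) choose r" unfolding L_def by (rule card_length_sum_list)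
  also have "r + ?n - 1 = ?n - 1 + r" using card_gt_0_iff[of "UNIV::'n set"] by simp
  finally show ?thesis .
qed




lemma Xv_pow: "Xv v ^ k = Poly_Mapping.single (Poly_Mapping.single v k) (1::'k::comm_ring_1)"
  by (simp add: Xv_def single_pow single_sum_nat)

lemma wt_bounds:
  fixes m :: "'n::finite option \<Rightarrow>\<^sub>0 nat"
  assumes "r > 0" "wdeg r m = r * k"
  shows "wt N m \<ge> - int k" "wt N m \<le> int (N * (r*k))"
proof -
  define a where "a = (\<Sum>i\<in>UNIV. lk m (Some i))"
  define b where "b = lk m None"
  have e: "a + r * b = r * k" using assms(2) by (simp add: wdeg_def a_def b_def)
  then have "r * b \<le> r * k" by linarith
  then have b: "b \<le> k" using assms(1) by simp
  have a: "a \<le> r * k" using e by linarith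
  have w: "wt N m = int N * int a - int b" by (simp add: wt_def a_def b_def)
  have nn: "0 \<le> int N * int a" by simp
  show "wt N m \<ge> - int k" unfolding w using b nn by linarith
  have ai: "int a \<le> int (r*k)" using a by (simp only: of_nat_le_iff)
  have "int N * int a \<le> int N * int (r*k)" by (rule mult_left_mono[OF ai]) simp
  then show "wt N m \<le> int (N * (r*k))" unfolding w by simp
qed

lemma wt_min_eq:
  fixes m :: "'n::finite option \<Rightarrow>\<^sub>0 nat"
  assumes "r > 0" "N > 0" "wdeg r m = r * k" "wt N m = - int k"
  shows "m = Poly_Mapping.single None k"
proof -
  define a where "a = (\<Sum>i\<in>UNIV. lk m (Some i))"
  define b where "b = lk m None"
  have e: "a + r * b = r * k" using assms(3) by (simp add: wdeg_def a_def b_def)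
  then have "r * b \<le> r * k" by linarith
  then have b: "b \<le> k" using assms(1) by simp
  have w: "int N * int a - int b = - int k" using assms(4) by (simp add: wt_def a_def b_def)
  have "0 \<le> int N * int a" by simp
  then have "int N * int a = 0" using w b by linarith
  then have a0: "a = 0" using assms(2) by simp
  then have b0: "b = k" using w by simp
  have s0: "lk m (Some i) = 0" for i using a0 by (simp add: a_def)
  show ?thesis
  proof (rule poly_mapping_eqI)
    fix v show "lk m v = lk (Poly_Mapping.single None k) v"
      using s0 b0 by (cases v) (auto simp: lookup_single b_def)
  qed
qed

lemma wdeg_single_None: "wdeg r (Poly_Mapping.single (None::'n::finite option) k) = r * k"
  by (simp add: wdeg_degw degw_single wv_def)

lemma wt_single_None: "wt N (Poly_Mapping.single (None::'n::finite option) k) = - int k"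
  by (simp add: wt_def lookup_single)

lemma minwt_eq:
  assumes "r > 0" "d = r*k"
  shows "minwt N r d TYPE('n::finite) = - int k"
  unfolding minwt_def
proof (rule Min_eqI)
  let ?S = "{wt N (m :: 'n option \<Rightarrow>\<^sub>0 nat) | m. wdeg r m = d}"
  have "?S \<subseteq> {- int k .. int (N * (r*k))}"
    using wt_bounds[OF assms(1)] assms(2) by fastforce
  then show "finite ?S" by (rule finite_subset) simp
  show "\<And>y. y \<in> ?S \<Longrightarrow> y \<ge> - int k"
    using wt_bounds[OF assms(1)] assms(2) by fastforce
  show "- int k \<in> ?S"
    using wdeg_single_None[of r k, where 'n='n] wt_single_None[of N k, where 'n='n] assms(2)
    by (metis (mono_tags, lifting) mem_Collect_eq)
qed

lemma cst_Xv_pow: "cst c * Xv v ^ k = Poly_Mapping.single (Poly_Mapping.single v k) c"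
  by (simp add: Xv_pow cst_single)

lemma Vmin_char:
  fixes N r d :: nat
  assumes r: "r > 0" and N: "N > 0" and dv: "r dvd d"
  shows "{f \<in> (Vmin N r d :: ('n::finite,'k::field) wpoly set). f \<noteq> 0} = {cst c * Xv None ^ (d div r) | c. c \<noteq> 0}"
proof -
  define k where "k = d div r"
  have d: "d = r * k" using dv by (simp add: k_def)
  define M :: "'n option \<Rightarrow>\<^sub>0 nat" where "M = Poly_Mapping.single None k"
  have mw: "minwt N r d TYPE('n) = - int k" by (rule minwt_eq[OF r d])
  show ?thesis unfolding k_def[symmetric] cst_Xv_pow M_def[symmetric]
  proof
    show "{f \<in> (Vmin N r d :: ('n,'k) wpoly set). f \<noteq> 0} \<subseteq> {Poly_Mapping.single M c | c. c \<noteq> 0}"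
    proof
      fix f :: "('n,'k) wpoly" assume "f \<in> {f \<in> Vmin N r d. f \<noteq> 0}"
      then have fV: "f \<in> Vmin N r d" and f0: "f \<noteq> 0" by auto
      have km: "m = M" if "m \<in> ks f" for m
        using fV that wt_min_eq[OF r N, of m k] mw d by (auto simp: Vmin_def homog_def M_def)
      have feq: "f = Poly_Mapping.single M (lk f M)"
      proof (rule poly_mapping_eqI)
        fix m show "lk f m = lk (Poly_Mapping.single M (lk f M)) m"
          using km[of m] by (cases "m = M") (auto simp: lookup_single in_keys_iff)
      qed
      then have "lk f M \<noteq> 0" using f0 by (metis single_zero)
      with feq show "f \<in> {Poly_Mapping.single M c | c. c \<noteq> 0}" by blast
    qed
    show "{Poly_Mapping.single M c | c. c \<noteq> 0} \<subseteq> {f \<in> (Vmin N r d :: ('n,'k) wpoly set). f \<noteq> 0}"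
    proof
      fix f :: "('n,'k) wpoly" assume "f \<in> {Poly_Mapping.single M c | c. c \<noteq> 0}"
      then obtain c where c: "c \<noteq> 0" "f = Poly_Mapping.single M c" by blast
      have "homog r d f" using c d by (simp add: homog_def M_def wdeg_single_None)
      moreover have "\<forall>m\<in>ks f. wt N m = minwt N r d TYPE('n)" using c mw by (simp add: M_def wt_single_None)
      moreover have "f \<noteq> 0" using c by (metis lookup_single_eq lookup_zero)
      ultimately show "f \<in> {f \<in> Vmin N r d. f \<noteq> 0}" by (simp add: Vmin_def)
    qed
  qed
qed

lemma lookup_shift:
  fixes h :: "('n,'k::comm_ring_1) wpoly"
  shows "lk (Poly_Mapping.single a 1 * h) (a + m0) = lk h m0"
proof -
  have "Poly_Mapping.single a 1 * h = (\<Sum>m\<in>ks h. Poly_Mapping.single (a + m) (lk h m))"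
    by (subst (1) pm_expand[of h]) (simp add: sum_distrib_left mult_single)
  then have "lk (Poly_Mapping.single a 1 * h) (a + m0) = (\<Sum>m\<in>ks h. if m = m0 then lk h m else 0)"
    by (simp add: lookup_sum lookup_single when_def)
  also have "\<dots> = lk h m0" by (simp add: in_keys_iff)
  finally show ?thesis .
qed

lemma of_nat_cst: "(of_nat n :: ('n,'k::comm_ring_1) wpoly) = cst (of_nat n)"
  by (simp add: cst_def)

lemma Stab_triv:
  fixes f :: "('n::finite,'k::field_char_0) wpoly"
  assumes r: "r > 0" and N: "N > 0" and dv: "r dvd d" and d0: "d > 0"
    and fV: "f \<in> Vmin N r d" and f0: "f \<noteq> 0"
  shows "StabU r f = {id}"
proof -
  define k where "k = d div r"
  have d: "d = r * k" using dv by (simp add: k_def)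
  have "k \<noteq> 0" using d d0 by auto
  then obtain k1 where k1: "k = Suc k1" using not0_implies_Suc by blast
  obtain c where c: "c \<noteq> 0" "f = cst c * Xv None ^ k"
    using Vmin_char[OF r N dv] fV f0 k_def by blast
  have fs: "f = Poly_Mapping.single (Poly_Mapping.single None k) c" using c by (simp add: cst_Xv_pow)
  show ?thesis
  proof
    show "{id} \<subseteq> StabU r f"
    proof -
      have "id = Phi (mat 1) 1 (0::('n,'k) wpoly)" by (simp add: Phi_id)
      then have "(id :: ('n,'k) wpoly \<Rightarrow> _) \<in> Urad r" unfolding Urad_def using Hr_0[of r] by blast
      then show ?thesis by (auto simp: StabU_def intro!: exI[of _ 1])
    qed
    show "StabU r f \<subseteq> {id}"
    proof
      fix u assume "u \<in> StabU r f"
      then obtain h c' where h: "h \<in> Hr r" and u: "u = Phi (mat 1) 1 h" and c': "c' \<noteq> 0" "u f = cst c' * f"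
        by (auto simp: StabU_def Urad_def)
      let ?y = "Xv None :: ('n,'k) wpoly"
      have uf: "u f = cst c * (?y + h) ^ k"
        unfolding u fs Phi_sig psubst_single pmon_single by simp
      have "h = 0"
      proof (rule ccontr)
        assume "h \<noteq> 0"
        then obtain m0 where m0: "m0 \<in> ks h" by (metis keys_eq_empty ex_in_conv)
        define Mk where "Mk = Poly_Mapping.single None k1 + m0"
        have m0N: "lk m0 None = 0" using h m0 by (simp add: Hr_def)
        have dMk: "degw nyw Mk = k1" by (simp add: Mk_def degw_nyw lookup_add m0N)
        define T where "T j = cst (of_nat (k choose j)) * (?y ^ j * h ^ (k - j))" for j
        have bin: "(?y + h) ^ k = (\<Sum>j\<le>k. T j)"
          unfolding binomial_ring T_def by (simp add: of_nat_cst mult_ac)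
        have hT: "homw nyw j (T j)" for j
        proof -
          have "homw nyw (j * 1 + (k - j) * 0) (?y ^ j * h ^ (k - j))"
            by (intro homw_mult homw_pow) (use homw_Xv[of nyw None] h in \<open>simp_all add: nyw_def Hr_iff\<close>)
          then show ?thesis unfolding T_def by (intro homw_cst_mult) simp
        qed
        have "lk (\<Sum>j\<le>k. T j) Mk = (\<Sum>j\<le>k. lk (T j) Mk)" by (simp add: lookup_sum)
        also have "\<dots> = lk (T k1) Mk + (\<Sum>j\<in>{..k} - {k1}. lk (T j) Mk)"
          by (rule sum.remove) (auto simp: k1)
        also have "(\<Sum>j\<in>{..k} - {k1}. lk (T j) Mk) = 0"
        proof (rule sum.neutral, rule ballI)
          fix j assume "j \<in> {..k} - {k1}"
          then have "degw nyw Mk \<noteq> j" using dMk by auto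
          then show "lk (T j) Mk = 0" by (rule homw_lookup[OF hT])
        qed
        also have "lk (T k1) Mk = of_nat k * lk h m0"
        proof -
          have "T k1 = cst (of_nat k) * (Poly_Mapping.single (Poly_Mapping.single None k1) 1 * h)"
            by (simp add: T_def k1 Xv_pow)
          then show ?thesis by (simp add: lookup_cst_mult Mk_def lookup_shift)
        qed
        finally have L: "lk ((?y + h) ^ k) Mk = of_nat k * lk h m0" using bin by simp
        have "lk (u f) Mk = c * (of_nat k * lk h m0)" using uf L by (simp add: lookup_cst_mult)
        moreover have "lk (u f) Mk = 0"
        proof -
          have "Poly_Mapping.single None k \<noteq> Mk"
          proof
            assume "Poly_Mapping.single None k = Mk"
            then have "lk (Poly_Mapping.single (None::'n option) k) None = lk Mk None" by simp
            then show False by (simp add: Mk_def lookup_add m0N k1)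
          qed
          then show ?thesis using c'(2) fs by (simp add: lookup_cst_mult lookup_single)
        qed
        ultimately have "c * (of_nat k * lk h m0) = 0" by simp
        moreover have "lk h m0 \<noteq> 0" using m0 by (simp add: in_keys_iff)
        moreover have "(of_nat k :: 'k) \<noteq> 0" using k1 of_nat_eq_0_iff by blast
        ultimately show False using c(1) by (metis mult_eq_0_iff)
      qed
      then show "u \<in> {id}" using u Phi_id by simp
    qed
  qed
qed


theorem mainTheorem13:
  fixes r d N :: nat
  assumes "r > 1" and "d > 0" and "r dvd d" and "N > 0"
  shows "(\<lambda>(A,c,h). Phi A c h) \<in> iso (SemiDir r) (AutGr r :: (('n::finite,'k::{alg_closed_field,field_char_0}) wpoly \<Rightarrow> _) monoid)
     \<and> card (xmonos r :: ('n option \<Rightarrow>\<^sub>0 nat) set) = (CARD('n) - 1 + r) choose r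
     \<and> (\<forall>u\<in>Urad r. \<forall>v\<in>(Urad r :: (('n,'k) wpoly \<Rightarrow> _) set). u \<circ> v = v \<circ> u)
     \<and> {f \<in> (Vmin N r d :: ('n,'k) wpoly set). f \<noteq> 0} = {cst c * Xv None ^ (d div r) | c. c \<noteq> 0}
     \<and> (\<forall>f \<in> (Vmin N r d :: ('n,'k) wpoly set). f \<noteq> 0 \<longrightarrow> StabU r f = {id})"
proof (intro conjI ballI impI)
  have r0: "r > 0" using assms(1) by simp
  show "(\<lambda>(A,c,h). Phi A c h) \<in> iso (SemiDir r) (AutGr r :: (('n::finite,'k::{alg_closed_field,field_char_0}) wpoly \<Rightarrow> _) monoid)"
    by (rule Phi_iso[OF assms(1)])
  show "card (xmonos r :: ('n option \<Rightarrow>\<^sub>0 nat) set) = (CARD('n) - 1 + r) choose r"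
    by (rule card_xmonos)
  show "u \<circ> v = v \<circ> u" if "u \<in> Urad r" "v \<in> (Urad r :: (('n,'k) wpoly \<Rightarrow> _) set)" for u v
    using Urad_comm[OF that] .
  show "{f \<in> (Vmin N r d :: ('n,'k) wpoly set). f \<noteq> 0} = {cst c * Xv None ^ (d div r) | c. c \<noteq> 0}"
    by (rule Vmin_char[OF r0 assms(4) assms(3)])
  show "StabU r f = {id}" if "f \<in> (Vmin N r d :: ('n,'k) wpoly set)" "f \<noteq> 0" for f
    by (rule Stab_triv[OF r0 assms(4) assms(3) assms(2) that])
qed

end
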